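(* Let $n>2$ be odd and let $\mathbf{A}_n$ be the algebra defined below. For every $(n-1)$-element subset $E$ of $A_n$ there is a term operation $t$ of $\mathbf{A}_n$ satisfying $t(y,x,x)=t(x,y,x)=t(x,x,y)=y$ for all $x,y\in E$.
   Context: Let $[n]=\{1,\dots,n\}$ and let $m$ be the minority operation on $[n]$ given by $m(x,y,z)=x$ if $y=z$, $m(x,y,z)=y$ if $x=z$, and $m(x,y,z)=z$ otherwise. On $\{0,1,2,3\}$, $+,-$ denote arithmetic modulo 4 and $\oplus$ denotes bitwise XOR of 2-bit binary representations. Let $A_n=[n]\times\{0,1,2,3\}$. For $i\in[n]$ define the ternary operation $t_i$ on $A_n$ by $t_i((a_1,b_1),(a_2,b_2),(a_3,b_3))=(i,\,b_1-b_2+b_3)$ if $a_1=a_2=a_3=i$, and $=(m(a_1,a_2,a_3),\,b_1\oplus b_2\oplus b_3)$ otherwise. The algebra $\mathbf{A}_n$ has universe $A_n$ and basic operations $t_1,\dots,t_n$. *)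

theory Defs
  imports Main
begin

type_synonym elem = "nat \<times> nat"

definition minority :: "nat \<Rightarrow> nat \<Rightarrow> nat \<Rightarrow> nat" where
  "minority x y z = (if y = z then x else if x = z then y else z)"

definition carrierA :: "nat \<Rightarrow> elem set" where
  "carrierA n = {1..n} \<times> {0..3}"

(* b1 - b2 + b3 modulo 4; for b2 \<le> 3 this is exactly arithmetic mod 4 *)
definition top_op :: "nat \<Rightarrow> elem \<Rightarrow> elem \<Rightarrow> elem \<Rightarrow> elem" where
  "top_op i p q r =
     (let (a1, b1) = p; (a2, b2) = q; (a3, b3) = r in
      if a1 = i \<and> a2 = i \<and> a3 = i then (i, (b1 + (4 - b2) + b3) mod 4)
      else (minority a1 a2 a3, xor (xor b1 b2) b3))"

inductive_set term3 :: "nat \<Rightarrow> (elem \<Rightarrow> elem \<Rightarrow> elem \<Rightarrow> elem) set" for n where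
  proj1: "(\<lambda>x y z. x) \<in> term3 n"
| proj2: "(\<lambda>x y z. y) \<in> term3 n"
| proj3: "(\<lambda>x y z. z) \<in> term3 n"
| app: "\<lbrakk>i \<in> {1..n}; f \<in> term3 n; g \<in> term3 n; h \<in> term3 n\<rbrakk>
        \<Longrightarrow> (\<lambda>x y z. top_op i (f x y z) (g x y z) (h x y z)) \<in> term3 n"

end

theory Submission
  imports Defs
begin

lemma xor_facts:
  fixes a b :: nat
  shows "xor (xor a b) b = a" "xor (xor b a) b = a" "xor (xor b b) a = a"
  by (simp_all add: xor.assoc xor.left_commute)

theorem claim5p3:
  fixes n :: nat and E :: "elem set"
  assumes "odd n" and "n > 2"
    and "E \<subseteq> carrierA n" and "card E = n - 1"
  shows "\<exists>t \<in> term3 n. \<forall>x\<in>E. \<forall>y\<in>E.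
           t y x x = y \<and> t x y x = y \<and> t x x y = y"
proof -
  have fin: "finite E" using assms(2,4) card.infinite by fastforce
  obtain i where i: "i \<in> {1..n}" "i \<notin> fst ` E"
  proof (rule ccontr)
    assume "\<not> thesis"
    then have "{1..n} \<subseteq> fst ` E" using that by blast
    then have "card {1..n} \<le> card (fst ` E)" using fin by (intro card_mono) auto
    also have "\<dots> \<le> card E" using fin by (rule card_image_le)
    finally show False using assms(2,4) by simp
  qed
  let ?t = "\<lambda>x y z. top_op i x y z"
  have "(\<lambda>x y z. top_op i ((\<lambda>x y z. x) x y z) ((\<lambda>x y z. y) x y z) ((\<lambda>x y z. z) x y z)) \<in> term3 n"
    by (rule term3.app[OF i(1)]) (rule term3.intros)+
  then have tm: "?t \<in> term3 n" by simp
  show ?thesis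
  proof (rule bexI[OF _ tm], intro ballI)
    fix x y assume x: "x \<in> E" and y: "y \<in> E"
    obtain a b where xa: "x = (a, b)" by force
    obtain c d where yc: "y = (c, d)" by force
    have "a \<noteq> i" "c \<noteq> i" using i(2) x y xa yc by force+
    then show "?t y x x = y \<and> ?t x y x = y \<and> ?t x x y = y"
      by (simp add: xa yc top_op_def minority_def xor_facts)
  qed
qed

end
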